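(* Let $W$ be a weak $V$-module, $z$ a nonzero complex number and $\alpha\in W^*$. The following are equivalent: (a) $\alpha\in\mathcal D_{P(z)}(W)$; (b) for each $v\in V$ there exist $l,k\in\mathbb N$ such that for every $w\in W$, $x^l(x-z)^k\langle\alpha,Y^o(v,x)w\rangle$ is a polynomial in $x$; (c) for each $v\in V$ there exist $l,k\in\mathbb N$ such that $x^l(x-z)^kY^*(v,x)\alpha\in W^*[[x]]$; (d) for each $v\in V$ there exists $k\in\mathbb N$ such that $(x-z)^kY^*(v,x)\alpha\in W^*((x))$.
   Context: $V$ is a vertex operator algebra with vacuum $\mathbf 1$, Virasoro element $\omega$, $Y(\omega,x)=\sum_{n}L(n)x^{-n-2}$, and $V=\coprod_{n\in\mathbb Z}V_{(n)}$ graded by $L(0)$-eigenvalues. The formal delta function is $\delta(x)=\sum_{n\in\mathbb Z}x^n$; binomial expressions $(x_1-x_2)^n$ are expanded in nonnegative powers of the second variable. A weak $V$-module is a vector space $W$ with a linear map $Y_W:V\to(\mathrm{End}\,W)[[x,x^{-1}]]$ such that $Y_W(v,x)w\in W((x))$, $Y_W(\mathbf 1,x)=\mathrm{id}_W$, and the Jacobi identity $x_0^{-1}\delta(\frac{x_1-x_2}{x_0})Y_W(u,x_1)Y_W(v,x_2)-x_0^{-1}\delta(\frac{x_2-x_1}{-x_0})Y_W(v,x_2)Y_W(u,x_1)=x_2^{-1}\delta(\frac{x_1-x_0}{x_2})Y_W(Y(u,x_0)v,x_2)$ holds. For $v\in V$ set $Y^o(v,x)=Y_W(e^{xL(1)}(-x^{-2})^{L(0)}v,x^{-1})$;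 then $Y^o(v,x)w\in W((x^{-1}))$. For $\alpha\in W^*$ define $Y^*(v,x)\alpha=\sum_{n\in\mathbb Z}v^*_n\alpha\,x^{-n-1}\in W^*[[x,x^{-1}]]$ by $\langle Y^*(v,x)\alpha,w\rangle=\langle\alpha,Y^o(v,x)w\rangle$ for $w\in W$. For a nonzero complex number $z$, $\alpha\in W^*$ is a $P(z)$-linear functional if for all $v\in V,w\in W$ the series $\langle\alpha,Y^o(v,x)w\rangle$ converges absolutely in $|x|>|z|$ to a rational function in $\mathbb C[x,x^{-1},(x-z)^{-1}]$, and for each fixed $v$ the orders of the poles at $0$ and at $z$ of these rational functions are bounded independently of $w$. $\mathcal D_{P(z)}(W)$ is the space of $P(z)$-linear functionals on $W$. *)

theory Defs
  imports "HOL-Analysis.Analysis" "HOL-Computational_Algebra.Polynomial"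
begin

text \<open>
  Vertex operators are given by their modes:  Y u n v = u_n v, so that
  Y(u,x) = sum_n u_n x^(-n-1).  A formal series in x (doubly infinite) with
  coefficients in A is represented by its coefficient function int => A,
  where f p is the coefficient of x^p.
\<close>

definition fsum :: "('i \<Rightarrow> 'a::comm_monoid_add) \<Rightarrow> 'a" where
  "fsum f = sum f {i. f i \<noteq> 0}"
  \<comment> \<open>sum of a finitely supported family (used for sums over i >= 0 that are finite by truncation)\<close>

text \<open>Jacobi identity, written out coefficientwise (coefficient of
  x0^(-l-1) x1^(-m-1) x2^(-n-1)):
  sum_(i>=0) binom(m,i) (u_(l+i) v)_(m+n-i) w
  = sum_(i>=0) (-1)^i binom(l,i) (u_(l+m-i) v_(n+i) w - (-1)^l v_(l+n-i) u_(m+i) w).\<close>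
definition jacobi_component ::
  "(complex \<Rightarrow> 'w \<Rightarrow> 'w::ab_group_add) \<Rightarrow> ('v \<Rightarrow> int \<Rightarrow> 'v \<Rightarrow> 'v)
   \<Rightarrow> ('v \<Rightarrow> int \<Rightarrow> 'w \<Rightarrow> 'w) \<Rightarrow> 'v \<Rightarrow> 'v \<Rightarrow> 'w \<Rightarrow> int \<Rightarrow> int \<Rightarrow> int \<Rightarrow> bool" where
  "jacobi_component sW Y YW u v w m n l \<longleftrightarrow>
     fsum (\<lambda>i::nat. sW (of_int m gchoose i) (YW (Y u (l + int i) v) (m + n - int i) w))
   = fsum (\<lambda>i::nat. sW ((-1) ^ i * (of_int l gchoose i))
            (YW u (l + m - int i) (YW v (n + int i) w)
             - sW ((-1) powi l) (YW v (l + n - int i) (YW u (m + int i) w))))"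

text \<open>Virasoro operators L(n) = omega_(n+1), since Y(omega,x) = sum L(n) x^(-n-2).\<close>
definition Lop :: "('v \<Rightarrow> int \<Rightarrow> 'v \<Rightarrow> 'v) \<Rightarrow> 'v \<Rightarrow> int \<Rightarrow> 'v \<Rightarrow> 'v" where
  "Lop Y om n = Y om (n + 1)"

definition hom_space :: "(complex \<Rightarrow> 'v \<Rightarrow> 'v) \<Rightarrow> ('v \<Rightarrow> int \<Rightarrow> 'v \<Rightarrow> 'v) \<Rightarrow> 'v \<Rightarrow> int \<Rightarrow> 'v set" where
  "hom_space sV Y om n = {v. Lop Y om 0 v = sV (of_int n) v}"

definition is_VOA ::
  "(complex \<Rightarrow> 'v \<Rightarrow> 'v::ab_group_add) \<Rightarrow> ('v \<Rightarrow> int \<Rightarrow> 'v \<Rightarrow> 'v) \<Rightarrow> 'v \<Rightarrow> 'v \<Rightarrow> bool" where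
  "is_VOA sV Y vac om \<longleftrightarrow>
     vector_space sV
   \<comment> \<open>Y : V \<otimes> V \<rightarrow> V[[x,x^-1]] bilinear\<close>
   \<and> (\<forall>u n. Vector_Spaces.linear sV sV (Y u n))
   \<and> (\<forall>n v. Vector_Spaces.linear sV sV (\<lambda>u. Y u n v))
   \<comment> \<open>grading V = \<coprod>_n V_(n) by L(0)-eigenvalues\<close>
   \<and> (\<forall>v. \<exists>c::int \<Rightarrow> 'v. finite {n. c n \<noteq> 0} \<and> (\<forall>n. c n \<in> hom_space sV Y om n)
            \<and> v = sum c {n. c n \<noteq> 0})
   \<and> (\<forall>n. \<exists>B. finite B \<and> hom_space sV Y om n \<subseteq> module.span sV B)
   \<and> (\<exists>N. \<forall>n<N. hom_space sV Y om n = {0})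
   \<comment> \<open>truncation: Y(u,x)v \<in> V((x))\<close>
   \<and> (\<forall>u v. \<exists>N. \<forall>n>N. Y u n v = 0)
   \<comment> \<open>vacuum property Y(1,x) = id\<close>
   \<and> (\<forall>n v. Y vac n v = (if n = -1 then v else 0))
   \<comment> \<open>creation property Y(v,x)1 \<in> V[[x]], Y(v,x)1|_(x=0) = v\<close>
   \<and> (\<forall>v. (\<forall>n\<ge>0. Y v n vac = 0) \<and> Y v (-1) vac = v)
   \<comment> \<open>Jacobi identity\<close>
   \<and> (\<forall>u v w m n l. jacobi_component sV Y Y u v w m n l)
   \<comment> \<open>Virasoro relations with some central charge c\<close>
   \<and> (\<exists>c::complex. \<forall>m n v.
        Lop Y om m (Lop Y om n v) - Lop Y om n (Lop Y om m v)
        = sV (of_int (m - n)) (Lop Y om (m + n) v)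
          + (if m + n = 0 then sV ((of_int m ^ 3 - of_int m) / 12 * c) v else 0))
   \<and> vac \<in> hom_space sV Y om 0 \<and> om \<in> hom_space sV Y om 2
   \<comment> \<open>L(-1)-derivative property: Y(L(-1)v,x) = d/dx Y(v,x)\<close>
   \<and> (\<forall>v n u. Y (Lop Y om (-1) v) n u = sV (- of_int n) (Y v (n - 1) u))"

definition is_weak_module ::
  "(complex \<Rightarrow> 'v \<Rightarrow> 'v::ab_group_add) \<Rightarrow> ('v \<Rightarrow> int \<Rightarrow> 'v \<Rightarrow> 'v) \<Rightarrow> 'v \<Rightarrow>
   (complex \<Rightarrow> 'w \<Rightarrow> 'w::ab_group_add) \<Rightarrow> ('v \<Rightarrow> int \<Rightarrow> 'w \<Rightarrow> 'w) \<Rightarrow> bool" where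
  "is_weak_module sV Y vac sW YW \<longleftrightarrow>
     vector_space sW
   \<and> (\<forall>v n. Vector_Spaces.linear sW sW (YW v n))
   \<and> (\<forall>n w. Vector_Spaces.linear sV sW (\<lambda>v. YW v n w))
   \<and> (\<forall>v w. \<exists>N. \<forall>n>N. YW v n w = 0)
   \<and> (\<forall>n w. YW vac n w = (if n = -1 then w else 0))
   \<and> (\<forall>u v w m n l. jacobi_component sW Y YW u v w m n l)"

definition hom_comp :: "(complex \<Rightarrow> 'v \<Rightarrow> 'v::ab_group_add) \<Rightarrow> ('v \<Rightarrow> int \<Rightarrow> 'v \<Rightarrow> 'v) \<Rightarrow> 'v \<Rightarrow> 'v \<Rightarrow> int \<Rightarrow> 'v" where
  "hom_comp sV Y om v = (THE c. finite {n. c n \<noteq> 0} \<and> (\<forall>n. c n \<in> hom_space sV Y om n)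
                               \<and> v = sum c {n. c n \<noteq> 0})"

text \<open>Coefficient of x^p in Y^o(v,x) w = Y_W(e^(x L(1)) (-x^(-2))^L(0) v, x^(-1)) w.
  For v of weight n, e^(xL(1))(-x^(-2))^L(0) v = sum_j (-1)^n x^(j-2n)/j! L(1)^j v and
  Y_W(u,x^(-1)) = sum_m u_m x^(m+1); so the coefficient of x^p is
  sum_n sum_j (-1)^n / j! (L(1)^j v_(n))_(p+2n-j-1) w.\<close>
definition Yo :: "(complex \<Rightarrow> 'v \<Rightarrow> 'v::ab_group_add) \<Rightarrow> ('v \<Rightarrow> int \<Rightarrow> 'v \<Rightarrow> 'v) \<Rightarrow> 'v \<Rightarrow>
   (complex \<Rightarrow> 'w \<Rightarrow> 'w::ab_group_add) \<Rightarrow> ('v \<Rightarrow> int \<Rightarrow> 'w \<Rightarrow> 'w) \<Rightarrow> 'v \<Rightarrow> int \<Rightarrow> 'w \<Rightarrow> 'w" where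
  "Yo sV Y om sW YW v p w =
     fsum (\<lambda>n::int. fsum (\<lambda>j::nat.
        sW ((-1) powi n / of_nat (fact j))
           (YW ((Lop Y om 1 ^^ j) (hom_comp sV Y om v n)) (p + 2 * n - int j - 1) w)))"

definition Ystar :: "(complex \<Rightarrow> 'v \<Rightarrow> 'v::ab_group_add) \<Rightarrow> ('v \<Rightarrow> int \<Rightarrow> 'v \<Rightarrow> 'v) \<Rightarrow> 'v \<Rightarrow>
   (complex \<Rightarrow> 'w \<Rightarrow> 'w::ab_group_add) \<Rightarrow> ('v \<Rightarrow> int \<Rightarrow> 'w \<Rightarrow> 'w) \<Rightarrow> 'v \<Rightarrow> ('w \<Rightarrow> complex) \<Rightarrow> int \<Rightarrow> ('w \<Rightarrow> complex)" where
  "Ystar sV Y om sW YW v \<alpha> p = (\<lambda>w. \<alpha> (Yo sV Y om sW YW v p w))"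

text \<open>Coefficients of x^l (x-z)^k f(x) for a formal series f with complex coefficients,
  using (x-z)^k = sum_i binom(k,i) (-z)^(k-i) x^i.\<close>
definition pmul_series :: "nat \<Rightarrow> nat \<Rightarrow> complex \<Rightarrow> (int \<Rightarrow> complex) \<Rightarrow> int \<Rightarrow> complex" where
  "pmul_series l k z f p = (\<Sum>i\<le>k. of_nat (k choose i) * (-z) ^ (k - i) * f (p - int l - int i))"

definition pmul_dual :: "nat \<Rightarrow> nat \<Rightarrow> complex \<Rightarrow> (int \<Rightarrow> 'w \<Rightarrow> complex) \<Rightarrow> int \<Rightarrow> 'w \<Rightarrow> complex" where
  "pmul_dual l k z F p = (\<lambda>w. pmul_series l k z (\<lambda>q. F q w) p)"

definition is_polynomial_series :: "(int \<Rightarrow> complex) \<Rightarrow> bool" where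
  "is_polynomial_series f \<longleftrightarrow> (\<forall>p<0. f p = 0) \<and> finite {p. f p \<noteq> 0}"

definition rat_0z :: "complex \<Rightarrow> (complex \<Rightarrow> complex) \<Rightarrow> bool" where
  "rat_0z z R \<longleftrightarrow> (\<exists>q a b. \<forall>x. x \<noteq> 0 \<and> x \<noteq> z \<longrightarrow> R x = poly q x / (x ^ a * (x - z) ^ b))"

text \<open>The order of the pole of R at c is at most m (no pole counts as order 0):
  (x-c)^m R(x) has a finite limit as x \<rightarrow> c.\<close>
definition pole_order_le :: "(complex \<Rightarrow> complex) \<Rightarrow> complex \<Rightarrow> nat \<Rightarrow> bool" where
  "pole_order_le R c m \<longleftrightarrow> (\<exists>L. ((\<lambda>x. (x - c) ^ m * R x) \<longlongrightarrow> L) (at c))"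

definition conv_abs_to :: "complex \<Rightarrow> (int \<Rightarrow> complex) \<Rightarrow> (complex \<Rightarrow> complex) \<Rightarrow> bool" where
  "conv_abs_to z f R \<longleftrightarrow> (\<forall>x. norm x > norm z \<longrightarrow>
      (\<lambda>p. norm (f p * x powi p)) summable_on UNIV \<and> ((\<lambda>p. f p * x powi p) has_sum R x) UNIV)"

definition is_Pz_linear ::
  "(complex \<Rightarrow> 'v \<Rightarrow> 'v::ab_group_add) \<Rightarrow> ('v \<Rightarrow> int \<Rightarrow> 'v \<Rightarrow> 'v) \<Rightarrow> 'v \<Rightarrow>
   (complex \<Rightarrow> 'w \<Rightarrow> 'w::ab_group_add) \<Rightarrow> ('v \<Rightarrow> int \<Rightarrow> 'w \<Rightarrow> 'w) \<Rightarrow> complex \<Rightarrow> ('w \<Rightarrow> complex) \<Rightarrow> bool" where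
  "is_Pz_linear sV Y om sW YW z \<alpha> \<longleftrightarrow>
     Vector_Spaces.linear sW (*) \<alpha>
   \<and> (\<forall>v. \<exists>A B. \<forall>w. \<exists>R.
        conv_abs_to z (\<lambda>p. \<alpha> (Yo sV Y om sW YW v p w)) R
        \<and> rat_0z z R \<and> pole_order_le R 0 A \<and> pole_order_le R z B)"

end

theory Submission
  imports Defs
begin


lemma has_sum_sum_fin:
  fixes g :: "'i \<Rightarrow> 'a \<Rightarrow> 'b::topological_comm_monoid_add"
  assumes "finite I" "\<And>i. i \<in> I \<Longrightarrow> (g i has_sum s i) A"
  shows "((\<lambda>p. \<Sum>i\<in>I. g i p) has_sum (\<Sum>i\<in>I. s i)) A"
  using assms
proof (induction I rule: finite_induct)
  case empty then show ?case by simp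
next
  case (insert i I)
  then show ?case by (simp add: has_sum_add)
qed

lemma summable_on_sum_fin:
  fixes g :: "'i \<Rightarrow> 'a \<Rightarrow> 'b::{topological_comm_monoid_add,t2_space}"
  assumes "finite I" "\<And>i. i \<in> I \<Longrightarrow> g i summable_on A"
  shows "(\<lambda>p. \<Sum>i\<in>I. g i p) summable_on A"
proof -
  have "((\<lambda>p. \<Sum>i\<in>I. g i p) has_sum (\<Sum>i\<in>I. infsum (g i) A)) A"
    using assms by (intro has_sum_sum_fin) auto
  then show ?thesis by (auto simp: summable_on_def)
qed

lemma has_sum_shift:
  fixes f :: "int \<Rightarrow> complex"
  assumes "((\<lambda>p. f p * x powi p) has_sum S) UNIV" "x \<noteq> 0"
  shows "((\<lambda>p. f (p - d) * x powi p) has_sum (x powi d * S)) UNIV"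
proof -
  have "((\<lambda>p. f (p - d) * x powi (p - d)) has_sum S) UNIV"
    using has_sum_reindex_bij_witness[of UNIV "\<lambda>p. p + d" "\<lambda>p. p - d" UNIV
        "\<lambda>p. f p * x powi p" "\<lambda>p. f (p - d) * x powi (p - d)" S S] assms(1) by simp
  from has_sum_cmult_right[OF this, of "x powi d"]
  show ?thesis using assms(2)
    by (simp add: power_int_diff field_simps)
qed

lemma abs_summable_shift:
  fixes f :: "int \<Rightarrow> complex"
  assumes "(\<lambda>p. norm (f p * x powi p)) summable_on UNIV" "x \<noteq> 0"
  shows "(\<lambda>p. norm (f (p - d) * x powi p)) summable_on UNIV"
proof -
  have "(\<lambda>p. norm (f (p - d) * x powi (p - d))) summable_on UNIV"
    using summable_on_reindex_bij_witness[of UNIV "\<lambda>p. p + d" "\<lambda>p. p - d" UNIV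
        "\<lambda>p. norm (f p * x powi p)" "\<lambda>p. norm (f (p - d) * x powi (p - d))"] assms(1) by simp
  from summable_on_cmult_right[OF this, of "norm (x powi d)"]
  show ?thesis using assms(2)
    by (simp add: power_int_diff field_simps norm_mult norm_divide)
qed

lemma pmul_expand:
  "pmul_series l k z f p * x powi p =
   (\<Sum>i\<le>k. (of_nat (k choose i) * (-z) ^ (k - i)) * (f (p - int (l + i)) * x powi p))"
  unfolding pmul_series_def sum_distrib_right by (rule sum.cong) (auto simp: algebra_simps)

lemma pmul_has_sum:
  fixes f :: "int \<Rightarrow> complex"
  assumes "((\<lambda>p. f p * x powi p) has_sum S) UNIV" "x \<noteq> 0"
  shows "((\<lambda>p. pmul_series l k z f p * x powi p) has_sum (x ^ l * (x - z) ^ k * S)) UNIV"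
proof -
  have "((\<lambda>p. \<Sum>i\<le>k. (of_nat (k choose i) * (-z) ^ (k - i)) * (f (p - int (l + i)) * x powi p))
     has_sum (\<Sum>i\<le>k. (of_nat (k choose i) * (-z) ^ (k - i)) * (x powi int (l + i) * S))) UNIV"
    by (intro has_sum_sum_fin has_sum_cmult_right has_sum_shift assms) auto
  moreover have "(\<Sum>i\<le>k. (of_nat (k choose i) * (-z) ^ (k - i)) * (x powi int (l + i) * S))
      = x ^ l * (x - z) ^ k * S"
  proof -
    have "(\<Sum>i\<le>k. (of_nat (k choose i) * (-z) ^ (k - i)) * (x powi int (l + i) * S))
        = x ^ l * S * (\<Sum>i\<le>k. of_nat (k choose i) * x ^ i * (-z) ^ (k - i))"
      by (simp only: power_int_of_nat) (simp add: sum_distrib_left power_add algebra_simps)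
    also have "\<dots> = x ^ l * S * (x + (-z)) ^ k" by (simp only: binomial_ring[of x "-z" k])
    finally show ?thesis by simp
  qed
  ultimately show ?thesis by (simp add: pmul_expand)
qed

lemma pmul_abs_summable:
  fixes f :: "int \<Rightarrow> complex"
  assumes "(\<lambda>p. norm (f p * x powi p)) summable_on UNIV" "x \<noteq> 0"
  shows "(\<lambda>p. norm (pmul_series l k z f p * x powi p)) summable_on UNIV"
proof (rule summable_on_comparison_test)
  show "(\<lambda>p. \<Sum>i\<le>k. norm (of_nat (k choose i) * (-z) ^ (k - i)) * norm (f (p - int (l + i)) * x powi p))
      summable_on UNIV"
    by (intro summable_on_sum_fin summable_on_cmult_right abs_summable_shift assms) auto
  fix p
  show "norm (pmul_series l k z f p * x powi p) \<le>
     (\<Sum>i\<le>k. norm (of_nat (k choose i) * (-z) ^ (k - i)) * norm (f (p - int (l + i)) * x powi p))"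
    unfolding pmul_expand by (rule order_trans[OF norm_sum]) (simp add: norm_mult)
qed simp

lemma pmul_trunc:
  assumes "\<And>p. p > P \<Longrightarrow> f p = 0"
  shows "\<And>p. p > P + int l + int k \<Longrightarrow> pmul_series l k z f p = 0"
  unfolding pmul_series_def using assms by (intro sum.neutral) auto

lemma pmul_0_0: "pmul_series 0 0 z f = f"
  by (auto simp: pmul_series_def fun_eq_iff)

lemma pmul_0_1: "pmul_series 0 1 z f p = - z * f p + f (p - 1)"
  by (simp add: pmul_series_def)

lemma pmul_0_1': "pmul_series 0 (Suc 0) z f p = - z * f p + f (p - 1)"
  by (simp add: pmul_series_def)

lemma pmul_Suc:
  "pmul_series 0 (Suc k) z f = pmul_series 0 1 z (pmul_series 0 k z f)"
proof
  fix p
  define A where "A = pmul_series 0 k z f"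
  have 1: "- z * A p = (\<Sum>i\<le>Suc k. of_nat (k choose i) * (-z) ^ (Suc k - i) * f (p - int i))"
    unfolding A_def pmul_series_def sum_distrib_left
    by (simp add: Suc_diff_le algebra_simps)
  have 2: "A (p - 1) = (\<Sum>i\<le>Suc k. (if i = 0 then 0 else
              of_nat (k choose (i - 1)) * (-z) ^ (Suc k - i) * f (p - int i)))"
    unfolding A_def pmul_series_def sum.atMost_Suc_shift
    by (simp add: algebra_simps)
  have "pmul_series 0 (Suc k) z f p =
     (\<Sum>i\<le>Suc k. of_nat (k choose i) * (-z) ^ (Suc k - i) * f (p - int i)
        + (if i = 0 then 0 else of_nat (k choose (i - 1)) * (-z) ^ (Suc k - i) * f (p - int i)))"
    unfolding pmul_series_def
  proof (rule sum.cong)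
    fix i assume "i \<in> {..Suc k}"
    show "of_nat (Suc k choose i) * (- z) ^ (Suc k - i) * f (p - int 0 - int i) =
      of_nat (k choose i) * (-z) ^ (Suc k - i) * f (p - int i)
        + (if i = 0 then 0 else of_nat (k choose (i - 1)) * (-z) ^ (Suc k - i) * f (p - int i))"
    proof (cases i)
      case 0 then show ?thesis by simp
    next
      case (Suc j) then show ?thesis by (simp add: algebra_simps)
    qed
  qed simp
  also have "\<dots> = - z * A p + A (p - 1)" unfolding 1 2 sum.distrib ..
  finally show "pmul_series 0 (Suc k) z f p = pmul_series 0 1 z (pmul_series 0 k z f) p"
    by (simp add: pmul_0_1' A_def)
qed

lemma step_summable:
  fixes f :: "int \<Rightarrow> complex"
  assumes trunc: "\<And>p. p > P \<Longrightarrow> f p = 0" and xz: "norm z < norm x"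
    and sg: "(\<lambda>p. norm (pmul_series 0 1 z f p * x powi p)) summable_on UNIV"
  shows "(\<lambda>p. norm (f p * x powi p)) summable_on UNIV"
proof -
  define t where "t = norm x"
  define \<rho> where "\<rho> = norm z / t"
  define T where "T p = norm (f p * x powi p)" for p
  define U where "U p = norm (pmul_series 0 1 z f p * x powi p)" for p
  define G where "G = infsum U UNIV"
  have tpos: "t > 0" using xz t_def by (metis norm_ge_zero le_less_trans)
  have x0: "x \<noteq> 0" using tpos t_def by auto
  have rho0: "0 \<le> \<rho>" and rho1: "\<rho> < 1" using xz tpos by (auto simp: \<rho>_def t_def)
  have T0: "T p \<ge> 0" for p by (simp add: T_def)
  have U0: "U p \<ge> 0" for p by (simp add: U_def)
  have Tz: "T p = 0" if "p > P" for p using trunc that by (simp add: T_def)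
  have Tstep: "T p \<le> U (p + 1) / t + \<rho> * T (p + 1)" for p
  proof -
    have e: "f p = pmul_series 0 1 z f (p + 1) + z * f (p + 1)" by (simp add: pmul_0_1')
    have "T p = norm (pmul_series 0 1 z f (p + 1) + z * f (p + 1)) * t powi p"
      by (subst e[symmetric]) (simp add: T_def norm_mult norm_power_int t_def)
    also have "\<dots> \<le> (norm (pmul_series 0 1 z f (p + 1)) + norm z * norm (f (p + 1))) * t powi p"
    proof (rule mult_right_mono)
      show "norm (pmul_series 0 1 z f (p + 1) + z * f (p + 1))
          \<le> norm (pmul_series 0 1 z f (p + 1)) + norm z * norm (f (p + 1))"
        using norm_triangle_ineq[of "pmul_series 0 1 z f (p + 1)" "z * f (p + 1)"]
        by (simp add: norm_mult)
    qed (use tpos in simp)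
    also have "\<dots> = U (p + 1) / t + \<rho> * T (p + 1)"
      using tpos by (simp add: U_def T_def \<rho>_def norm_mult norm_power_int t_def[symmetric]
          power_int_add field_simps)
    finally show ?thesis .
  qed
  have Usum: "U summable_on UNIV" using sg unfolding U_def .
  have Ule: "sum U A \<le> G" if "finite A" for A
    unfolding G_def using Usum that by (intro finite_sum_le_infsum) (auto simp: U0)
  have main: "sum T {m..P} \<le> G / (t * (1 - \<rho>))" for m
  proof -
    have sh: "(\<Sum>p\<in>{m..P}. h (p + 1)) = (\<Sum>q\<in>{m+1..P+1}. h q)" for h :: "int \<Rightarrow> real"
      by (rule sum.reindex_bij_witness[of _ "\<lambda>q. q - 1" "\<lambda>p. p + 1"]) auto
    have "sum T {m..P} \<le> (\<Sum>p\<in>{m..P}. U (p + 1) / t + \<rho> * T (p + 1))"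
      by (intro sum_mono Tstep)
    also have "\<dots> = (\<Sum>q\<in>{m+1..P+1}. U q) / t + \<rho> * (\<Sum>q\<in>{m+1..P+1}. T q)"
      using sh[of "\<lambda>q. U q / t"] sh[of "\<lambda>q. \<rho> * T q"]
      by (simp add: sum.distrib sum_divide_distrib sum_distrib_left)
    also have "\<dots> \<le> G / t + \<rho> * sum T {m..P}"
    proof (intro add_mono divide_right_mono mult_left_mono Ule)
      have "(\<Sum>q\<in>{m+1..P+1}. T q) \<le> (\<Sum>q\<in>{m..P+1}. T q)"
        by (intro sum_mono2) (auto simp: T0)
      also have "\<dots> = sum T {m..P}"
        by (intro sum.mono_neutral_right) (auto simp: Tz)
      finally show "(\<Sum>q\<in>{m+1..P+1}. T q) \<le> sum T {m..P}" .
    qed (use tpos rho0 in auto)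
    finally have "(1 - \<rho>) * sum T {m..P} \<le> G / t" by (simp add: algebra_simps)
    then show ?thesis using rho1 tpos by (simp add: field_simps)
  qed
  show ?thesis
  proof (rule nonneg_bdd_above_summable_on)
    show "bdd_above (sum (\<lambda>p. norm (f p * x powi p)) ` {F. F \<subseteq> UNIV \<and> finite F})"
    proof (rule bdd_aboveI2)
      fix F :: "int set" assume "F \<in> {F. F \<subseteq> UNIV \<and> finite F}"
      then have fin: "finite F" by simp
      define m where "m = Min (insert P F)"
      have mF: "\<And>p. p \<in> F \<Longrightarrow> m \<le> p" using fin by (simp add: m_def)
      have "sum T F \<le> sum T (F \<union> {m..P})" by (intro sum_mono2) (auto simp: fin T0)
      also have "\<dots> = sum T {m..P}"
        by (intro sum.mono_neutral_right) (auto simp: fin Tz mF not_le)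
      also have "\<dots> \<le> G / (t * (1 - \<rho>))" by (rule main)
      finally show "sum (\<lambda>p. norm (f p * x powi p)) F \<le> G / (t * (1 - \<rho>))" by (simp add: T_def)
    qed
  qed simp
qed

lemma pmul_summable_back:
  fixes f :: "int \<Rightarrow> complex"
  assumes "\<And>p. p > P \<Longrightarrow> f p = 0" "norm z < norm x"
    and "(\<lambda>p. norm (pmul_series 0 k z f p * x powi p)) summable_on UNIV"
  shows "(\<lambda>p. norm (f p * x powi p)) summable_on UNIV"
  using assms
proof (induction k arbitrary: f P)
  case 0 then show ?case by (simp add: pmul_0_0)
next
  case (Suc k)
  have "(\<lambda>p. norm (pmul_series 0 k z f p * x powi p)) summable_on UNIV"
  proof (rule step_summable[of "P + int 0 + int k"])
    show "\<And>p. P + int 0 + int k < p \<Longrightarrow> pmul_series 0 k z f p = 0"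
      by (rule pmul_trunc[where P=P and f=f and l=0 and k=k and z=z]) (use Suc.prems in auto)
    show "norm z < norm x" by (rule Suc.prems)
    show "(\<lambda>p. norm (pmul_series 0 1 z (pmul_series 0 k z f) p * x powi p)) summable_on UNIV"
      using Suc.prems(3) unfolding pmul_Suc .
  qed
  then show ?case using Suc by blast
qed



lemma laurent_unique_top:
  fixes c :: "int \<Rightarrow> complex"
  assumes trunc: "\<And>p. p > m \<Longrightarrow> c p = 0" and r0: "r \<ge> 0"
    and conv: "\<And>x. norm x > r \<Longrightarrow> (\<lambda>p. norm (c p * x powi p)) summable_on UNIV
                 \<and> ((\<lambda>p. c p * x powi p) has_sum 0) UNIV"
  shows "c m = 0"
proof (rule ccontr)
  assume cm: "c m \<noteq> 0"
  define s where "s = r + 1"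
  have s0: "s > 0" "s > r" using r0 by (auto simp: s_def)
  define d where "d p = (if p < m then c p else 0)" for p
  define Kd where "Kd = infsum (\<lambda>p. norm (d p * of_real s powi p)) UNIV"
  define K where "K = Kd * s powi (1 - m)"
  have dsum: "(\<lambda>p. norm (d p * of_real s powi p)) summable_on UNIV"
  proof (rule summable_on_comparison_test)
    show "(\<lambda>p. norm (c p * of_real s powi p)) summable_on UNIV" using conv[of "of_real s"] s0 by auto
  qed (auto simp: d_def norm_mult)
  have Kd0: "Kd \<ge> 0" unfolding Kd_def by (intro infsum_nonneg) auto
  have K0: "K \<ge> 0" unfolding K_def using Kd0 s0 by simp
  have bound: "norm (c m) * t \<le> K" if ts: "t \<ge> s" for t :: real
  proof -
    have t0: "t > 0" using ts s0 by simp
    define x where "x = (of_real t :: complex)"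
    have nx: "norm x = t" using t0 by (simp add: x_def)
    have x0: "x \<noteq> 0" using t0 by (simp add: x_def)
    have hs: "((\<lambda>p. c p * x powi p) has_sum 0) UNIV" using conv[of x] nx ts s0 by auto
    have split: "c p * x powi p = (if p = m then c m * x powi m else 0) + d p * x powi p" for p
      using trunc[of p] by (auto simp: d_def)
    have hfin: "((\<lambda>p. if p = m then c m * x powi m else 0) has_sum (c m * x powi m)) UNIV"
      by (rule has_sum_finite_neutralI[of "{m}"]) auto
    have hd: "((\<lambda>p. d p * x powi p) has_sum (- (c m * x powi m))) UNIV"
    proof -
      have "((\<lambda>p. c p * x powi p - (if p = m then c m * x powi m else 0)) has_sum (0 - c m * x powi m)) UNIV"
        using has_sum_add[OF hs has_sum_uminusI[OF hfin]] by simp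
      moreover have "(\<lambda>p. c p * x powi p - (if p = m then c m * x powi m else 0)) = (\<lambda>p. d p * x powi p)"
        using split by (auto simp: fun_eq_iff algebra_simps)
      ultimately show ?thesis by simp
    qed
    have hg: "((\<lambda>p. norm (d p * of_real s powi p) * (s powi (1 - m) * t powi (m - 1))) has_sum
              (Kd * (s powi (1 - m) * t powi (m - 1)))) UNIV"
      unfolding Kd_def by (intro has_sum_cmult_left) (use dsum in \<open>simp add: summable_iff_has_sum_infsum[symmetric]\<close>)
    have "norm (- (c m * x powi m)) \<le> Kd * (s powi (1 - m) * t powi (m - 1))"
    proof (rule norm_infsum_le[OF hd hg])
      fix p
      show "norm (d p * x powi p) \<le> norm (d p * of_real s powi p) * (s powi (1 - m) * t powi (m - 1))"
      proof (cases "p < m")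
        case False then show ?thesis by (simp add: d_def)
      next
        case True
        have "t powi (p - m + 1) \<le> s powi (p - m + 1)"
        proof (cases "p - m + 1 = 0")
          case True then show ?thesis by simp
        next
          case False then show ?thesis using \<open>p < m\<close> ts s0 by (intro power_int_antimono) auto
        qed
        moreover have "t powi p = t powi (p - m + 1) * t powi (m - 1)"
          using t0 by (simp flip: power_int_add)
        moreover have "s powi p * s powi (1 - m) = s powi (p - m + 1)"
          using s0 by (subst power_int_add[symmetric]) (auto simp: algebra_simps)
        ultimately have "t powi p \<le> s powi p * (s powi (1 - m) * t powi (m - 1))"
          using s0 t0 by (simp add: mult.assoc[symmetric] mult_right_mono)
        then show ?thesis using s0 t0
          by (simp add: norm_mult norm_power_int nx mult_left_mono mult.assoc)
      qed
    qed
    then have "norm (c m) * t powi m \<le> Kd * (s powi (1 - m) * t powi (m - 1))"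
      by (simp add: norm_mult norm_power_int nx)
    moreover have tm: "t powi m = t powi (m - 1) * t"
    proof -
      have "t powi m = t powi (m - 1 + 1)" by simp
      also have "\<dots> = t powi (m - 1) * t" using t0 by (intro power_int_add_1) auto
      finally show ?thesis .
    qed
    ultimately have "(norm (c m) * t) * t powi (m - 1) \<le> K * t powi (m - 1)"
      by (simp add: K_def mult_ac)
    moreover have "t powi (m - 1) > 0" using t0 by simp
    ultimately show ?thesis by simp
  qed
  have cpos: "norm (c m) > 0" using cm by simp
  have "norm (c m) * (s + K / norm (c m)) \<le> K" by (rule bound) (use K0 cpos in auto)
  then have "norm (c m) * s \<le> 0" using cpos by (simp add: algebra_simps)
  then show False using cpos s0 by (simp add: mult_le_0_iff)
qed

lemma laurent_unique:
  fixes c :: "int \<Rightarrow> complex"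
  assumes trunc: "\<And>p. p > P \<Longrightarrow> c p = 0" and r0: "r \<ge> 0"
    and conv: "\<And>x. norm x > r \<Longrightarrow> (\<lambda>p. norm (c p * x powi p)) summable_on UNIV
                 \<and> ((\<lambda>p. c p * x powi p) has_sum 0) UNIV"
  shows "c p = 0"
proof -
  have "\<forall>p. p > P - int n \<longrightarrow> c p = 0" for n
  proof (induction n)
    case 0 then show ?case using trunc by simp
  next
    case (Suc n)
    have "c (P - int n) = 0"
      by (rule laurent_unique_top[OF _ r0 conv]) (use Suc in auto)
    show ?case
    proof (intro allI impI)
      fix p assume "p > P - int (Suc n)"
      then have "p = P - int n \<or> p > P - int n" by auto
      then show "c p = 0" using Suc \<open>c (P - int n) = 0\<close> by auto
    qed
  qed
  moreover have "p > P - int (nat (P - p + 1))" by simp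
  ultimately show ?thesis by blast
qed



lemma no_pole_contra:
  fixes g h :: "complex \<Rightarrow> complex"
  assumes lim: "(g \<longlongrightarrow> L) (at c)" and e: "e > 0"
    and ev: "eventually (\<lambda>x. (x - c) ^ e * g x = h x) (at c)"
    and cont: "isCont h c" and hc: "h c \<noteq> 0"
  shows False
proof -
  have "((\<lambda>x. (x - c) ^ e * g x) \<longlongrightarrow> (c - c) ^ e * L) (at c)"
    by (intro tendsto_intros lim)
  then have "((\<lambda>x. (x - c) ^ e * g x) \<longlongrightarrow> 0) (at c)" using e by (simp add: zero_power)
  then have "(h \<longlongrightarrow> 0) (at c)" using ev by (rule Lim_transform_eventually)
  moreover have "(h \<longlongrightarrow> h c) (at c)" using cont by (simp add: isCont_def)
  ultimately have "h c = 0" using tendsto_unique[OF at_neq_bot] by blast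
  then show False using hc by simp
qed

lemma rational_poles:
  fixes R :: "complex \<Rightarrow> complex"
  assumes z0: "z \<noteq> 0" and rat: "\<And>x. x \<noteq> 0 \<Longrightarrow> x \<noteq> z \<Longrightarrow> R x = poly q x / (x ^ a * (x - z) ^ b)"
    and p0: "pole_order_le R 0 A" and pz: "pole_order_le R z B"
  shows "\<exists>Q. \<forall>x. x \<noteq> 0 \<and> x \<noteq> z \<longrightarrow> x ^ A * (x - z) ^ B * R x = poly Q x"
proof (cases "q = 0")
  case True
  then show ?thesis by (intro exI[of _ 0]) (auto simp: rat)
next
  case False
  obtain q1 where q1: "q = [:- 0, 1:] ^ order 0 q * q1" "\<not> [:- 0, 1:] dvd q1"
    using order_decomp[OF False] by blast
  define m where "m = order 0 q"
  have q10: "poly q1 0 \<noteq> 0" using q1(2) poly_eq_0_iff_dvd[of q1 0] by simp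
  then have "q1 \<noteq> 0" by auto
  obtain q2 where q2: "q1 = [:- z, 1:] ^ order z q1 * q2" "\<not> [:- z, 1:] dvd q2"
    using order_decomp[OF \<open>q1 \<noteq> 0\<close>] by blast
  define m' where "m' = order z q1"
  have q2z: "poly q2 z \<noteq> 0" using q2(2) poly_eq_0_iff_dvd[of q2 z] by simp
  have q20: "poly q2 0 \<noteq> 0"
  proof
    assume "poly q2 0 = 0"
    then have "poly q1 0 = 0" by (subst q2(1)) simp
    with q10 show False by simp
  qed
  have Rform: "R x = x ^ m * (x - z) ^ m' * poly q2 x / (x ^ a * (x - z) ^ b)"
    if "x \<noteq> 0" "x \<noteq> z" for x
  proof -
    have "poly q x = x ^ m * (x - z) ^ m' * poly q2 x"
      by (subst q1(1), subst q2(1)) (simp add: m_def m'_def poly_power)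
    then show ?thesis using rat that by simp
  qed
  obtain L0 where L0: "((\<lambda>x. (x - 0) ^ A * R x) \<longlongrightarrow> L0) (at 0)"
    using p0 unfolding pole_order_le_def by blast
  obtain Lz where Lz: "((\<lambda>x. (x - z) ^ B * R x) \<longlongrightarrow> Lz) (at z)"
    using pz unfolding pole_order_le_def by blast
  have ev0: "eventually (\<lambda>x. x \<noteq> 0 \<and> x \<noteq> z) (at (0::complex))"
    using eventually_neq_at_within[of 0 0 UNIV] eventually_neq_at_within[of z 0 UNIV]
    by (auto elim: eventually_elim2)
  have evz: "eventually (\<lambda>x. x \<noteq> 0 \<and> x \<noteq> z) (at z)"
    using eventually_neq_at_within[of 0 z UNIV] eventually_neq_at_within[of z z UNIV]
    by (auto elim: eventually_elim2)
  have a_le: "a \<le> A + m"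
  proof (rule ccontr)
    assume "\<not> a \<le> A + m"
    define e where "e = a - (A + m)"
    have e: "e > 0" "a = e + A + m" using \<open>\<not> a \<le> A + m\<close> by (auto simp: e_def)
    show False
    proof (rule no_pole_contra[OF L0 e(1)])
      show "eventually (\<lambda>x. (x - 0) ^ e * ((x - 0) ^ A * R x) = (x - z) ^ m' * poly q2 x / (x - z) ^ b) (at 0)"
        using ev0
      proof (rule eventually_mono)
        fix x :: complex assume x: "x \<noteq> 0 \<and> x \<noteq> z"
        then show "(x - 0) ^ e * ((x - 0) ^ A * R x) = (x - z) ^ m' * poly q2 x / (x - z) ^ b"
          by (simp add: Rform e(2) power_add field_simps)
      qed
      show "isCont (\<lambda>x. (x - z) ^ m' * poly q2 x / (x - z) ^ b) 0"
        using z0 by (intro continuous_intros) auto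
      show "(0 - z) ^ m' * poly q2 0 / (0 - z) ^ b \<noteq> 0" using z0 q20 by simp
    qed
  qed
  have b_le: "b \<le> B + m'"
  proof (rule ccontr)
    assume "\<not> b \<le> B + m'"
    define e where "e = b - (B + m')"
    have e: "e > 0" "b = e + B + m'" using \<open>\<not> b \<le> B + m'\<close> by (auto simp: e_def)
    show False
    proof (rule no_pole_contra[OF Lz e(1)])
      show "eventually (\<lambda>x. (x - z) ^ e * ((x - z) ^ B * R x) = x ^ m * poly q2 x / x ^ a) (at z)"
        using evz
      proof (rule eventually_mono)
        fix x :: complex assume x: "x \<noteq> 0 \<and> x \<noteq> z"
        then show "(x - z) ^ e * ((x - z) ^ B * R x) = x ^ m * poly q2 x / x ^ a"
          by (simp add: Rform e(2) power_add field_simps)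
      qed
      show "isCont (\<lambda>x. x ^ m * poly q2 x / x ^ a) z"
        using z0 by (intro continuous_intros) auto
      show "z ^ m * poly q2 z / z ^ a \<noteq> 0" using z0 q2z by simp
    qed
  qed
  obtain e1 where e1: "A + m = a + e1" using a_le le_Suc_ex by blast
  obtain e2 where e2: "B + m' = b + e2" using b_le le_Suc_ex by blast
  show ?thesis
  proof (intro exI[of _ "[:0, 1:] ^ e1 * [:- z, 1:] ^ e2 * q2"] allI impI)
    fix x :: complex assume x: "x \<noteq> 0 \<and> x \<noteq> z"
    have "x ^ A * (x - z) ^ B * R x = x ^ (A + m) * (x - z) ^ (B + m') * poly q2 x / (x ^ a * (x - z) ^ b)"
      using x by (simp add: Rform power_add)
    also have "\<dots> = x ^ e1 * (x - z) ^ e2 * poly q2 x"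
      unfolding e1 e2 using x by (simp add: power_add field_simps)
    also have "\<dots> = poly ([:0, 1:] ^ e1 * [:- z, 1:] ^ e2 * q2) x"
      by (simp add: poly_power)
    finally show "x ^ A * (x - z) ^ B * R x = poly ([:0, 1:] ^ e1 * [:- z, 1:] ^ e2 * q2) x" .
  qed
qed

definition pcoef :: "complex poly \<Rightarrow> int \<Rightarrow> complex" where
  "pcoef Q p = (if p \<ge> 0 then coeff Q (nat p) else 0)"

lemma pcoef_has_sum:
  "((\<lambda>p. pcoef Q p * x powi p) has_sum poly Q x) UNIV"
proof (rule has_sum_finite_neutralI[of "int ` {..degree Q}"])
  show "finite (int ` {..degree Q})" by simp
  show "int ` {..degree Q} \<subseteq> UNIV" by simp
  fix p assume "p \<in> UNIV - int ` {..degree Q}"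
  then have "p < 0 \<or> nat p > degree Q" by (auto simp: image_iff) (metis atMost_iff int_nat_eq not_le)
  then show "pcoef Q p * x powi p = 0" by (auto simp: pcoef_def coeff_eq_0)
next
  have "poly Q x = (\<Sum>i\<le>degree Q. coeff Q i * x ^ i)" by (rule poly_altdef)
  also have "\<dots> = (\<Sum>p\<in>int ` {..degree Q}. pcoef Q p * x powi p)"
    by (subst sum.reindex) (auto simp: pcoef_def)
  finally show "poly Q x = (\<Sum>p\<in>int ` {..degree Q}. pcoef Q p * x powi p)" .
qed

lemma pcoef_poly_series: "is_polynomial_series (pcoef Q)"
proof -
  have "{p. pcoef Q p \<noteq> 0} \<subseteq> int ` {..degree Q}"
  proof
    fix p assume "p \<in> {p. pcoef Q p \<noteq> 0}"
    then have p: "p \<ge> 0" "coeff Q (nat p) \<noteq> 0" by (auto simp: pcoef_def split: if_splits)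
    have "nat p \<le> degree Q" using p(2) by (rule le_degree)
    then show "p \<in> int ` {..degree Q}" using p(1) by (auto simp: image_iff intro!: bexI[of _ "nat p"])
  qed
  then have "finite {p. pcoef Q p \<noteq> 0}" by (rule finite_subset) simp
  then show ?thesis unfolding is_polynomial_series_def by (simp add: pcoef_def)
qed

lemma pcoef_trunc: "p > int (degree Q) \<Longrightarrow> pcoef Q p = 0"
  by (auto simp: pcoef_def coeff_eq_0)



lemma poly_series_pcoef:
  assumes "is_polynomial_series h"
  shows "\<exists>Q. h = pcoef Q"
proof -
  have neg: "\<And>p. p < 0 \<Longrightarrow> h p = 0" and fin: "finite {p. h p \<noteq> 0}"
    using assms by (auto simp: is_polynomial_series_def)
  define D where "D = Max (insert 0 {p. h p \<noteq> 0})"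
  have D: "p \<le> D" if "h p \<noteq> 0" for p
    unfolding D_def by (rule Max_ge) (use fin that in auto)
  define Q where "Q = Poly (map (\<lambda>i. h (int i)) [0..<Suc (nat D)])"
  have "h p = pcoef Q p" for p
  proof (cases "p \<ge> 0")
    case False then show ?thesis using neg by (simp add: pcoef_def)
  next
    case True
    show ?thesis
    proof (cases "nat p < Suc (nat D)")
      case True
      then show ?thesis using \<open>p \<ge> 0\<close> by (simp add: pcoef_def Q_def nth_default_def del: upt_Suc)
    next
      case False
      then have "h p = 0" using D[of p] \<open>p \<ge> 0\<close> by (cases "h p = 0") auto
      then show ?thesis using False \<open>p \<ge> 0\<close> by (simp add: pcoef_def Q_def nth_default_def)
    qed
  qed
  then show ?thesis by blast
qed

lemma pmul_shift0: "pmul_series l k z f p = pmul_series 0 k z f (p - int l)"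
  by (simp add: pmul_series_def algebra_simps)

lemma AB_fwd:
  fixes f :: "int \<Rightarrow> complex"
  assumes trunc: "\<And>p. p > P \<Longrightarrow> f p = 0" and z0: "z \<noteq> 0"
    and conv: "conv_abs_to z f R" and rat: "rat_0z z R"
    and pA: "pole_order_le R 0 A" and pB: "pole_order_le R z B"
  shows "is_polynomial_series (pmul_series A B z f)"
proof -
  obtain q a b where qab: "\<And>x. x \<noteq> 0 \<Longrightarrow> x \<noteq> z \<Longrightarrow> R x = poly q x / (x ^ a * (x - z) ^ b)"
    using rat unfolding rat_0z_def by blast
  obtain Q where Q: "\<And>x. x \<noteq> 0 \<Longrightarrow> x \<noteq> z \<Longrightarrow> x ^ A * (x - z) ^ B * R x = poly Q x"
    using rational_poles[OF z0 qab pA pB] by blast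
  define h where "h = pmul_series A B z f"
  define c where "c p = h p - pcoef Q p" for p
  have "c p = 0" for p
  proof (rule laurent_unique[of "max (P + int A + int B) (int (degree Q))" c "norm z"])
    fix p assume "p > max (P + int A + int B) (int (degree Q))"
    then show "c p = 0" unfolding c_def h_def
      using pmul_trunc[where P=P and f=f and l=A and k=B and z=z and p=p] trunc pcoef_trunc[of Q p] by auto
  next
    show "norm z \<ge> 0" by simp
  next
    fix x :: complex assume x: "norm z < norm x"
    then have x0: "x \<noteq> 0" and xz: "x \<noteq> z" by auto
    have fs: "(\<lambda>p. norm (f p * x powi p)) summable_on UNIV"
      and fh: "((\<lambda>p. f p * x powi p) has_sum R x) UNIV"
      using conv x unfolding conv_abs_to_def by auto
    have hh: "((\<lambda>p. h p * x powi p) has_sum poly Q x) UNIV"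
      using pmul_has_sum[OF fh x0, of A B z] Q[OF x0 xz] by (simp add: h_def)
    have "((\<lambda>p. h p * x powi p + - (pcoef Q p * x powi p)) has_sum (poly Q x + - poly Q x)) UNIV"
      by (intro has_sum_add hh has_sum_uminusI pcoef_has_sum)
    then have cs: "((\<lambda>p. c p * x powi p) has_sum 0) UNIV"
      by (simp add: c_def algebra_simps)
    have hs: "(\<lambda>p. norm (h p * x powi p)) summable_on UNIV"
      unfolding h_def by (rule pmul_abs_summable[OF fs x0])
    have ps: "(\<lambda>p. norm (pcoef Q p * x powi p)) summable_on UNIV"
    proof (rule finite_nonzero_values_imp_summable_on)
      have "{p \<in> UNIV. norm (pcoef Q p * x powi p) \<noteq> 0} \<subseteq> {p. pcoef Q p \<noteq> 0}" by auto
      moreover have "finite {p. pcoef Q p \<noteq> 0}"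
        using pcoef_poly_series[of Q] by (simp add: is_polynomial_series_def)
      ultimately show "finite {p \<in> UNIV. norm (pcoef Q p * x powi p) \<noteq> 0}" by (rule finite_subset)
    qed
    have "(\<lambda>p. norm (c p * x powi p)) summable_on UNIV"
    proof (rule summable_on_comparison_test)
      show "(\<lambda>p. norm (h p * x powi p) + norm (pcoef Q p * x powi p)) summable_on UNIV"
        by (rule summable_on_add[OF hs ps])
      fix p
      show "norm (c p * x powi p) \<le> norm (h p * x powi p) + norm (pcoef Q p * x powi p)"
        unfolding c_def left_diff_distrib by (rule norm_triangle_ineq4)
    qed simp
    then show "(\<lambda>p. norm (c p * x powi p)) summable_on UNIV \<and> ((\<lambda>p. c p * x powi p) has_sum 0) UNIV"
      using cs by simp
  qed
  then have "h = pcoef Q" by (auto simp: c_def fun_eq_iff)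
  then show ?thesis using pcoef_poly_series h_def by simp
qed

lemma AB_bwd:
  fixes f :: "int \<Rightarrow> complex"
  assumes trunc: "\<And>p. p > P \<Longrightarrow> f p = 0" and z0: "z \<noteq> 0"
    and poly: "is_polynomial_series (pmul_series l k z f)"
  shows "\<exists>R. conv_abs_to z f R \<and> rat_0z z R \<and> pole_order_le R 0 l \<and> pole_order_le R z k"
proof -
  obtain Q where Q: "pmul_series l k z f = pcoef Q" using poly_series_pcoef[OF poly] by blast
  define R where "R x = poly Q x / (x ^ l * (x - z) ^ k)" for x
  have "conv_abs_to z f R" unfolding conv_abs_to_def
  proof (intro allI impI conjI)
    fix x :: complex assume x: "norm z < norm x"
    then have x0: "x \<noteq> 0" and xz: "x \<noteq> z" by auto
    have ps: "(\<lambda>p. norm (pcoef Q p * x powi p)) summable_on UNIV"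
    proof (rule finite_nonzero_values_imp_summable_on)
      have "{p \<in> UNIV. norm (pcoef Q p * x powi p) \<noteq> 0} \<subseteq> {p. pcoef Q p \<noteq> 0}" by auto
      moreover have "finite {p. pcoef Q p \<noteq> 0}"
        using pcoef_poly_series[of Q] by (simp add: is_polynomial_series_def)
      ultimately show "finite {p \<in> UNIV. norm (pcoef Q p * x powi p) \<noteq> 0}" by (rule finite_subset)
    qed
    have "(\<lambda>p. norm (pcoef Q (p - - int l) * x powi p)) summable_on UNIV"
      by (rule abs_summable_shift[OF ps x0])
    moreover have "pcoef Q (p - - int l) = pmul_series 0 k z f p" for p
      using pmul_shift0[of l k z f "p + int l"] Q by simp
    ultimately have "(\<lambda>p. norm (pmul_series 0 k z f p * x powi p)) summable_on UNIV" by simp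
    then show fs: "(\<lambda>p. norm (f p * x powi p)) summable_on UNIV"
      using pmul_summable_back[where P=P and f=f and z=z and x=x and k=k] trunc x by blast
    then have "(\<lambda>p. f p * x powi p) summable_on UNIV" by (rule abs_summable_summable)
    then obtain S where fh: "((\<lambda>p. f p * x powi p) has_sum S) UNIV" by (auto simp: summable_on_def)
    have "((\<lambda>p. pcoef Q p * x powi p) has_sum (x ^ l * (x - z) ^ k * S)) UNIV"
      using pmul_has_sum[OF fh x0, of l k z] Q by simp
    then have "x ^ l * (x - z) ^ k * S = poly Q x"
      using pcoef_has_sum[of Q x] by (rule has_sum_unique)
    moreover have nz: "x ^ l * (x - z) ^ k \<noteq> 0" using x0 xz by simp
    ultimately have "S = R x" unfolding R_def
      by (metis nonzero_mult_div_cancel_left)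
    then show "((\<lambda>p. f p * x powi p) has_sum R x) UNIV" using fh by simp
  qed
  moreover have "rat_0z z R" unfolding rat_0z_def R_def by (intro exI[of _ Q] exI[of _ l] exI[of _ k]) simp
  moreover have "pole_order_le R 0 l" unfolding pole_order_le_def
  proof
    have "((\<lambda>x. poly Q x / (x - z) ^ k) \<longlongrightarrow> poly Q 0 / (0 - z) ^ k) (at 0)"
      using z0 by (intro tendsto_intros) auto
    moreover have "eventually (\<lambda>x. poly Q x / (x - z) ^ k = (x - 0) ^ l * R x) (at (0::complex))"
      using eventually_neq_at_within[of 0 0 UNIV]
    proof (rule eventually_mono)
      fix x :: complex assume "x \<noteq> 0"
      then have "x ^ l \<noteq> 0" by simp
      have "(x - 0) ^ l * R x = (x ^ l * poly Q x) / (x ^ l * (x - z) ^ k)"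
        by (simp only: R_def diff_zero times_divide_eq_right)
      also have "\<dots> = poly Q x / (x - z) ^ k"
        by (rule nonzero_mult_divide_mult_cancel_left[OF \<open>x ^ l \<noteq> 0\<close>])
      finally show "poly Q x / (x - z) ^ k = (x - 0) ^ l * R x" by (rule sym)
    qed
    ultimately show "((\<lambda>x. (x - 0) ^ l * R x) \<longlongrightarrow> poly Q 0 / (0 - z) ^ k) (at 0)"
      by (rule Lim_transform_eventually)
  qed
  moreover have "pole_order_le R z k" unfolding pole_order_le_def
  proof
    have "((\<lambda>x. poly Q x / x ^ l) \<longlongrightarrow> poly Q z / z ^ l) (at z)"
      using z0 by (intro tendsto_intros) auto
    moreover have "eventually (\<lambda>x. poly Q x / x ^ l = (x - z) ^ k * R x) (at z)"
      using eventually_neq_at_within[of z z UNIV]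
    proof (rule eventually_mono)
      fix x :: complex assume "x \<noteq> z"
      then have "(x - z) ^ k \<noteq> 0" by simp
      have "(x - z) ^ k * R x = ((x - z) ^ k * poly Q x) / ((x - z) ^ k * x ^ l)"
        by (simp only: R_def times_divide_eq_right mult.commute[of "x ^ l"])
      also have "\<dots> = poly Q x / x ^ l"
        by (rule nonzero_mult_divide_mult_cancel_left[OF \<open>(x - z) ^ k \<noteq> 0\<close>])
      finally show "poly Q x / x ^ l = (x - z) ^ k * R x" by (rule sym)
    qed
    ultimately show "((\<lambda>x. (x - z) ^ k * R x) \<longlongrightarrow> poly Q z / z ^ l) (at z)"
      by (rule Lim_transform_eventually)
  qed
  ultimately show ?thesis by blast
qed



lemma fsum_zero: "(\<And>i. f i = 0) \<Longrightarrow> fsum f = 0"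
  by (simp add: fsum_def)

lemma VOA_vs: "is_VOA sV Y vac om \<Longrightarrow> vector_space sV"
  unfolding is_VOA_def by (elim conjE) assumption

lemma VOA_hom: "is_VOA sV Y vac om \<Longrightarrow> module_hom sV sV (Y u n)"
proof -
  assume "is_VOA sV Y vac om"
  then have "\<forall>u n. Vector_Spaces.linear sV sV (Y u n)"
    unfolding is_VOA_def by (elim conjE) assumption
  then show ?thesis by (simp add: module_hom_iff_linear)
qed

lemma VOA_grading:
  assumes "is_VOA sV Y vac om"
  shows "\<exists>c::int \<Rightarrow> _. finite {n. c n \<noteq> 0}
    \<and> (\<forall>n. c n \<in> hom_space sV Y om n) \<and> v = sum c {n. c n \<noteq> 0}"
proof -
  have "\<forall>v. \<exists>c::int \<Rightarrow> _. finite {n. c n \<noteq> 0} \<and> (\<forall>n. c n \<in> hom_space sV Y om n)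
            \<and> v = sum c {n. c n \<noteq> 0}"
    using assms unfolding is_VOA_def by (elim conjE) assumption
  then show ?thesis by (rule spec)
qed

lemma VOA_lower: "is_VOA sV Y vac om \<Longrightarrow> \<exists>N. \<forall>n<N. hom_space sV Y om n = {0}"
  unfolding is_VOA_def by (elim conjE) assumption

lemma VOA_vir01: "is_VOA sV Y vac om \<Longrightarrow>
   Lop Y om 0 (Lop Y om 1 v) - Lop Y om 1 (Lop Y om 0 v) = sV (-1) (Lop Y om 1 v)"
proof -
  assume "is_VOA sV Y vac om"
  then obtain c :: complex where "\<forall>m n v.
        Lop Y om m (Lop Y om n v) - Lop Y om n (Lop Y om m v)
        = sV (of_int (m - n)) (Lop Y om (m + n) v)
          + (if m + n = 0 then sV ((of_int m ^ 3 - of_int m) / 12 * c) v else 0)"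
    unfolding is_VOA_def by (elim conjE exE) assumption
  from this[rule_format, of 0 1 v] show ?thesis by simp
qed

lemma eig_indep:
  fixes sV :: "complex \<Rightarrow> 'v \<Rightarrow> 'v::ab_group_add"
  assumes vs: "vector_space sV" and lin: "module_hom sV sV L"
  shows "finite S \<Longrightarrow> (\<forall>n\<in>S. L (d n) = sV (of_int n) (d n)) \<Longrightarrow> sum d S = 0 \<Longrightarrow> \<forall>n\<in>S. d n = 0"
proof (induction S arbitrary: d rule: finite_induct)
  case empty then show ?case by simp
next
  case (insert m S)
  interpret vector_space sV by (rule vs)
  interpret h: module_hom sV sV L by (rule lin)
  have dm: "d m = - sum d S" using insert.prems(2) insert.hyps by (simp add: add_eq_0_iff)
  define d' where "d' n = sV (of_int n - of_int m) (d n)" for n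
  have eig': "\<forall>n\<in>S. L (d' n) = sV (of_int n) (d' n)"
  proof
    fix n assume "n \<in> S"
    then have "L (d n) = sV (of_int n) (d n)" using insert.prems(1) by simp
    then show "L (d' n) = sV (of_int n) (d' n)"
      by (simp add: d'_def h.scale mult.commute)
  qed
  have "sum d' S = (\<Sum>n\<in>S. L (d n)) - sV (of_int m) (sum d S)"
    using insert.prems(1)
    by (simp add: d'_def scale_left_diff_distrib sum_subtractf scale_sum_right)
  also have "\<dots> = L (sum d S) - sV (of_int m) (sum d S)" by (simp add: h.sum)
  also have "\<dots> = 0"
  proof -
    have "L (d m) = sV (of_int m) (d m)" using insert.prems(1) by simp
    then show ?thesis using dm by (simp add: h.neg)
  qed
  finally have "\<forall>n\<in>S. d' n = 0" using insert.IH eig' by blast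
  then have dS: "\<forall>n\<in>S. d n = 0" using insert.hyps by (auto simp: d'_def)
  then have "sum d S = 0" by simp
  then show ?case using dm dS by simp
qed

lemma hom_comp_props:
  assumes voa: "is_VOA sV Y vac om"
  shows "finite {n. hom_comp sV Y om v n \<noteq> 0} \<and> (\<forall>n. hom_comp sV Y om v n \<in> hom_space sV Y om n)"
proof -
  define P where "P c \<longleftrightarrow> finite {n. c n \<noteq> 0} \<and> (\<forall>n. c n \<in> hom_space sV Y om n)
                               \<and> v = sum c {n. c n \<noteq> 0}" for c
  have vs: "vector_space sV" by (rule VOA_vs[OF voa])
  interpret vector_space sV by (rule vs)
  have lin: "module_hom sV sV (Lop Y om 0)" unfolding Lop_def by (rule VOA_hom[OF voa])
  interpret h: module_hom sV sV "Lop Y om 0" by (rule lin)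
  have ex: "\<exists>c. P c" unfolding P_def by (rule VOA_grading[OF voa])
  have uniq: "c1 = c2" if "P c1" "P c2" for c1 c2
  proof -
    define S where "S = {n. c1 n \<noteq> 0} \<union> {n. c2 n \<noteq> 0}"
    have f1: "finite {n. c1 n \<noteq> 0}" using that(1) unfolding P_def by blast
    have f2: "finite {n. c2 n \<noteq> 0}" using that(2) unfolding P_def by blast
    have fS: "finite S" using f1 f2 by (simp add: S_def)
    have "sum c1 S = sum c1 {n. c1 n \<noteq> 0}"
      by (rule sum.mono_neutral_right) (auto simp: S_def f1 f2)
    then have s1: "sum c1 S = v" using that(1) by (simp add: P_def)
    have "sum c2 S = sum c2 {n. c2 n \<noteq> 0}"
      by (rule sum.mono_neutral_right) (auto simp: S_def f1 f2)
    then have s2: "sum c2 S = v" using that(2) by (simp add: P_def)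
    define d where "d n = c1 n - c2 n" for n
    have sd: "sum d S = 0" using s1 s2 by (simp add: d_def sum_subtractf)
    have ev: "\<forall>n\<in>S. Lop Y om 0 (d n) = sV (of_int n) (d n)"
    proof
      fix n
      have "c1 n \<in> hom_space sV Y om n" "c2 n \<in> hom_space sV Y om n"
        using that unfolding P_def by blast+
      then show "Lop Y om 0 (d n) = sV (of_int n) (d n)"
        by (simp add: hom_space_def d_def h.diff scale_right_diff_distrib)
    qed
    have "\<forall>n\<in>S. d n = 0" by (rule eig_indep[OF vs lin fS, where d=d, OF ev sd])
    show ?thesis
    proof
      fix n
      show "c1 n = c2 n"
      proof (cases "n \<in> S")
        case True
        then have "d n = 0" using \<open>\<forall>n\<in>S. d n = 0\<close> by blast
        then show ?thesis by (simp add: d_def)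
      next
        case False
        then show ?thesis by (simp add: S_def)
      qed
    qed
  qed
  obtain c0 where c0: "P c0" using ex by blast
  have "P (THE c. P c)"
  proof (rule theI[of P c0])
    show "P c0" by (rule c0)
    fix x assume "P x"
    then show "x = c0" using c0 by (rule uniq)
  qed
  moreover have "hom_comp sV Y om v = (THE c. P c)" unfolding hom_comp_def P_def by (rule refl)
  ultimately have "P (hom_comp sV Y om v)" by simp
  then show ?thesis by (simp add: P_def)
qed

lemma L1_lower:
  assumes voa: "is_VOA sV Y vac om"
  shows "u \<in> hom_space sV Y om n \<Longrightarrow> (Lop Y om 1 ^^ j) u \<in> hom_space sV Y om (n - int j)"
proof (induction j)
  case 0 then show ?case by simp
next
  case (Suc j)
  interpret vector_space sV by (rule VOA_vs[OF voa])
  interpret h1: module_hom sV sV "Lop Y om 1" unfolding Lop_def by (rule VOA_hom[OF voa])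
  define x where "x = (Lop Y om 1 ^^ j) u"
  have x: "Lop Y om 0 x = sV (of_int (n - int j)) x" using Suc x_def by (simp add: hom_space_def)
  have "Lop Y om 0 (Lop Y om 1 x) = Lop Y om 1 (Lop Y om 0 x) + sV (-1) (Lop Y om 1 x)"
    using VOA_vir01[OF voa, of x] by (simp add: algebra_simps)
  also have "\<dots> = sV (of_int (n - int j)) (Lop Y om 1 x) + sV (-1) (Lop Y om 1 x)"
    by (simp only: x h1.scale)
  also have "\<dots> = sV (of_int (n - int j) + -1) (Lop Y om 1 x)"
    by (simp only: scale_left_distrib)
  also have "\<dots> = sV (of_int (n - int (Suc j))) (Lop Y om 1 x)"
    by simp
  finally show ?case by (simp add: hom_space_def x_def)
qed

lemma finite_bound: "finite T \<Longrightarrow> \<exists>B::int. \<forall>t\<in>T. g t \<le> B"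
  by (intro exI[of _ "Max (insert 0 (g ` T))"]) auto

lemma Yo_trunc:
  assumes voa: "is_VOA sV Y vac om" and wm: "is_weak_module sV Y vac sW YW"
  shows "\<exists>P. \<forall>p>P. Yo sV Y om sW YW v p w = 0"
proof -
  interpret vector_space sV by (rule VOA_vs[OF voa])
  have vsW: "vector_space sW" using wm by (simp add: is_weak_module_def)
  have YW0: "YW 0 m w' = 0" for m w'
  proof -
    have "module_hom sV sW (\<lambda>v. YW v m w')" using wm by (simp add: is_weak_module_def module_hom_iff_linear)
    then show ?thesis by (rule module_hom.zero)
  qed
  interpret W: vector_space sW by (rule vsW)
  have sW0: "sW a 0 = 0" for a by (rule W.scale_zero_right)
  have L1pow0: "(Lop Y om 1 ^^ j) 0 = 0" for j
  proof (induction j)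
    case (Suc j)
    interpret h1: module_hom sV sV "Lop Y om 1" unfolding Lop_def by (rule VOA_hom[OF voa])
    show ?case using Suc by simp
  qed simp
  define c where "c = hom_comp sV Y om v"
  have fin: "finite {n. c n \<noteq> 0}" and cV: "\<And>n. c n \<in> hom_space sV Y om n"
    using hom_comp_props[OF voa] c_def by auto
  obtain N where N: "\<And>n. n < N \<Longrightarrow> hom_space sV Y om n = {0}" using VOA_lower[OF voa] by blast
  define T where "T = Sigma {n. c n \<noteq> 0} (\<lambda>n. {..nat (n - N)})"
  have fT: "finite T" unfolding T_def using fin by (intro finite_SigmaI) auto
  have "\<forall>t. \<exists>P. \<forall>m>P. YW ((Lop Y om 1 ^^ snd t) (c (fst t))) m w = 0"
    using wm by (simp add: is_weak_module_def)
  then have "\<exists>PP. \<forall>t. \<forall>m>PP t. YW ((Lop Y om 1 ^^ snd t) (c (fst t))) m w = 0"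
    by (rule choice)
  then obtain PP where PP: "\<And>t m. m > PP t \<Longrightarrow> YW ((Lop Y om 1 ^^ snd t) (c (fst t))) m w = 0"
    by blast
  obtain B where B: "\<And>t. t \<in> T \<Longrightarrow> PP t - 2 * fst t + int (snd t) + 1 \<le> B"
    using finite_bound[OF fT, of "\<lambda>t. PP t - 2 * fst t + int (snd t) + 1"] by blast
  show ?thesis
  proof (intro exI allI impI)
    fix p assume p: "p > B"
    have term0: "YW ((Lop Y om 1 ^^ j) (hom_comp sV Y om v n)) (p + 2 * n - int j - 1) w = 0" for n j
    proof (cases "c n = 0")
      case True then show ?thesis by (simp add: c_def[symmetric] L1pow0 YW0)
    next
      case False
      show ?thesis
      proof (cases "j \<le> nat (n - N)")
        case True
        then have "(n, j) \<in> T" using False by (simp add: T_def)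
        then have "PP (n, j) < p + 2 * n - int j - 1" using B[of "(n, j)"] p by simp
        then show ?thesis using PP[of "(n, j)"] by (simp add: c_def)
      next
        case False
        then have "n - int j < N" by simp
        then have "(Lop Y om 1 ^^ j) (c n) = 0" using L1_lower[OF voa cV[of n], of j] N by blast
        then show ?thesis by (simp add: c_def YW0)
      qed
    qed
    show "Yo sV Y om sW YW v p w = 0"
      unfolding Yo_def by (intro fsum_zero) (simp add: term0 sW0)
  qed
qed



lemma dual_eq: "pmul_dual l k z (Ystar sV Y om sW YW v \<alpha>) p = (\<lambda>_. 0) \<longleftrightarrow>
   (\<forall>w. pmul_series l k z (\<lambda>q. \<alpha> (Yo sV Y om sW YW v q w)) p = 0)"
  by (simp add: pmul_dual_def Ystar_def fun_eq_iff)

theorem lemma3p4: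
  fixes sV :: "complex \<Rightarrow> 'v \<Rightarrow> 'v::ab_group_add" and Y :: "'v \<Rightarrow> int \<Rightarrow> 'v \<Rightarrow> 'v"
    and vac om :: 'v
    and sW :: "complex \<Rightarrow> 'w \<Rightarrow> 'w::ab_group_add" and YW :: "'v \<Rightarrow> int \<Rightarrow> 'w \<Rightarrow> 'w"
    and z :: complex and \<alpha> :: "'w \<Rightarrow> complex"
  assumes "is_VOA sV Y vac om"
    and "is_weak_module sV Y vac sW YW"
    and "z \<noteq> 0"
    and "Vector_Spaces.linear sW (*) \<alpha>"
  shows "(is_Pz_linear sV Y om sW YW z \<alpha>
          \<longleftrightarrow> (\<forall>v. \<exists>l k. \<forall>w. is_polynomial_series
                 (pmul_series l k z (\<lambda>p. \<alpha> (Yo sV Y om sW YW v p w)))))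
       \<and> ((\<forall>v. \<exists>l k. \<forall>w. is_polynomial_series
                 (pmul_series l k z (\<lambda>p. \<alpha> (Yo sV Y om sW YW v p w))))
          \<longleftrightarrow> (\<forall>v. \<exists>l k. \<forall>p<0. pmul_dual l k z (Ystar sV Y om sW YW v \<alpha>) p = (\<lambda>_. 0)))
       \<and> ((\<forall>v. \<exists>l k. \<forall>p<0. pmul_dual l k z (Ystar sV Y om sW YW v \<alpha>) p = (\<lambda>_. 0))
          \<longleftrightarrow> (\<forall>v. \<exists>k N. \<forall>p<N. pmul_dual 0 k z (Ystar sV Y om sW YW v \<alpha>) p = (\<lambda>_. 0)))"
proof -
  note voa = assms(1) and wm = assms(2) and z0 = assms(3) and lin = assms(4)
  define f where "f v w = (\<lambda>p. \<alpha> (Yo sV Y om sW YW v p w))" for v w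
  have \<alpha>0: "\<alpha> 0 = 0"
  proof -
    have "module_hom sW (*) \<alpha>" using lin by (simp add: module_hom_iff_linear)
    then show ?thesis by (rule module_hom.zero)
  qed
  have trunc: "\<exists>P. \<forall>p>P. f v w p = 0" for v w
  proof -
    obtain P where "\<forall>p>P. Yo sV Y om sW YW v p w = 0" using Yo_trunc[OF voa wm] by blast
    then have "\<forall>p>P. f v w p = 0" by (simp add: f_def \<alpha>0)
    then show ?thesis by blast
  qed
  have AB: "is_Pz_linear sV Y om sW YW z \<alpha> \<longleftrightarrow>
      (\<forall>v. \<exists>l k. \<forall>w. is_polynomial_series (pmul_series l k z (f v w)))"
  proof
    assume a: "is_Pz_linear sV Y om sW YW z \<alpha>"
    show "\<forall>v. \<exists>l k. \<forall>w. is_polynomial_series (pmul_series l k z (f v w))"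
    proof
      fix v
      obtain A B where AB: "\<forall>w. \<exists>R. conv_abs_to z (f v w) R \<and> rat_0z z R
          \<and> pole_order_le R 0 A \<and> pole_order_le R z B"
        using a unfolding is_Pz_linear_def f_def by blast
      have "is_polynomial_series (pmul_series A B z (f v w))" for w
      proof -
        obtain R where R: "conv_abs_to z (f v w) R" "rat_0z z R" "pole_order_le R 0 A" "pole_order_le R z B"
          using AB by blast
        obtain P where P: "\<forall>p>P. f v w p = 0" using trunc by blast
        show ?thesis by (rule AB_fwd[of P "f v w" z R A B]) (use P R z0 in auto)
      qed
      then show "\<exists>l k. \<forall>w. is_polynomial_series (pmul_series l k z (f v w))" by blast
    qed
  next
    assume b: "\<forall>v. \<exists>l k. \<forall>w. is_polynomial_series (pmul_series l k z (f v w))"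
    have "\<exists>A B. \<forall>w. \<exists>R. conv_abs_to z (f v w) R \<and> rat_0z z R
          \<and> pole_order_le R 0 A \<and> pole_order_le R z B" for v
    proof -
      obtain l k where lk: "\<forall>w. is_polynomial_series (pmul_series l k z (f v w))" using b by blast
      have "\<exists>R. conv_abs_to z (f v w) R \<and> rat_0z z R \<and> pole_order_le R 0 l \<and> pole_order_le R z k" for w
      proof -
        obtain P where P: "\<forall>p>P. f v w p = 0" using trunc by blast
        show ?thesis by (rule AB_bwd[of P]) (use P lk z0 in auto)
      qed
      then show ?thesis by blast
    qed
    then show "is_Pz_linear sV Y om sW YW z \<alpha>"
      unfolding is_Pz_linear_def f_def using lin by blast
  qed
  have BC: "(\<forall>v. \<exists>l k. \<forall>w. is_polynomial_series (pmul_series l k z (f v w))) \<longleftrightarrow>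
      (\<forall>v. \<exists>l k. \<forall>p<0. \<forall>w. pmul_series l k z (f v w) p = 0)"
  proof (intro iffI allI)
    fix v
    assume b: "\<forall>v. \<exists>l k. \<forall>w. is_polynomial_series (pmul_series l k z (f v w))"
    then obtain l k where "\<forall>w. is_polynomial_series (pmul_series l k z (f v w))" by blast
    then show "\<exists>l k. \<forall>p<0. \<forall>w. pmul_series l k z (f v w) p = 0"
      unfolding is_polynomial_series_def by blast
  next
    fix v
    assume c: "\<forall>v. \<exists>l k. \<forall>p<0. \<forall>w. pmul_series l k z (f v w) p = 0"
    then obtain l k where lk: "\<forall>p<0. \<forall>w. pmul_series l k z (f v w) p = 0" by blast
    have "is_polynomial_series (pmul_series l k z (f v w))" for w
    proof -
      obtain P where P: "\<forall>p>P. f v w p = 0" using trunc by blast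
      have "{p. pmul_series l k z (f v w) p \<noteq> 0} \<subseteq> {0..P + int l + int k}"
        using lk pmul_trunc[where P=P and f="f v w" and l=l and k=k and z=z] P
        by (auto simp: not_less) (meson not_le)+
      then have "finite {p. pmul_series l k z (f v w) p \<noteq> 0}" by (rule finite_subset) simp
      then show ?thesis unfolding is_polynomial_series_def using lk by blast
    qed
    then show "\<exists>l k. \<forall>w. is_polynomial_series (pmul_series l k z (f v w))" by blast
  qed
  have CD: "(\<forall>v. \<exists>l k. \<forall>p<0. \<forall>w. pmul_series l k z (f v w) p = 0) \<longleftrightarrow>
      (\<forall>v. \<exists>k N. \<forall>p<N. \<forall>w. pmul_series 0 k z (f v w) p = 0)"
  proof (intro iffI allI)
    fix v
    assume "\<forall>v. \<exists>l k. \<forall>p<0. \<forall>w. pmul_series l k z (f v w) p = 0"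
    then obtain l k where lk: "\<forall>p<0. \<forall>w. pmul_series l k z (f v w) p = 0" by blast
    have "\<forall>p < - int l. \<forall>w. pmul_series 0 k z (f v w) p = 0"
    proof (intro allI impI)
      fix p w assume "p < - int l"
      then have "pmul_series l k z (f v w) (p + int l) = 0" using lk by simp
      then show "pmul_series 0 k z (f v w) p = 0" using pmul_shift0[of l k z "f v w" "p + int l"] by simp
    qed
    then show "\<exists>k N. \<forall>p<N. \<forall>w. pmul_series 0 k z (f v w) p = 0" by blast
  next
    fix v
    assume "\<forall>v. \<exists>k N. \<forall>p<N. \<forall>w. pmul_series 0 k z (f v w) p = 0"
    then obtain k N where kN: "\<forall>p<N. \<forall>w. pmul_series 0 k z (f v w) p = 0" by blast
    have "\<forall>p<0. \<forall>w. pmul_series (nat (- N)) k z (f v w) p = 0"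
    proof (intro allI impI)
      fix p w assume "p < (0::int)"
      then have "p - int (nat (- N)) < N" by auto
      then show "pmul_series (nat (- N)) k z (f v w) p = 0"
        using kN pmul_shift0[of "nat (- N)" k z "f v w" p] by simp
    qed
    then show "\<exists>l k. \<forall>p<0. \<forall>w. pmul_series l k z (f v w) p = 0" by blast
  qed
  show ?thesis
    unfolding dual_eq f_def[symmetric] using AB BC CD by simp
qed


end
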